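(* Let $n$ be even, let $r\le s\le 2r-1$, and let $m=s-r+1$. Then $$\nu(n,P^{(r)}_s)\ge 2h(n,r,m)+h(n,r-1,m).$$
   Context: $K^{(r)}_n$ denotes the ordered complete $r$-uniform hypergraph on vertex set $[n]=\{1,\dots,n\}$ (natural order), whose edges are all $r$-subsets of $[n]$. A copy of an ordered hypergraph $H$ in $K^{(r)}_n$ is the image of $H$ under an order-preserving injection $V(H)\to[n]$. The natural (tight) path $P^{(r)}_s$ has vertices $v_1<\dots<v_s$ and its edges are all sets of $r$ consecutive vertices $\{v_j,\dots,v_{j+r-1}\}$, $1\le j\le s-r+1$. For an ordered $r$-uniform $H$, $\nu(n,H)$ is the maximum number of copies of $H$ in $K^{(r)}_n$ that are pairwise edge-disjoint. An interval partition $(X,Y,Z)$ of $[n]$ consists of consecutive (possibly empty) intervals $X<Y<Z$ with union $[n]$. A set $S\subseteq[n]$ is $m$-left-biased if there is an interval partition $(X,Y,Z)$ of $[n]$ with $|X|=|Z|$, $|X\cap S|=m$ and $|Z\cap S|=0$. $h(n,t,m)$ denotes the number of $t$-subsets of $[n]$ that are $m$-left-biased. *)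

theory Defs
  imports Main
begin

text \<open>An ordered hypergraph H is given by its number of vertices k (vertex set
  {0..<k}, natural order) and its edge set E.  A copy of H in the ordered complete
  r-uniform hypergraph on [n] = {1..n} is the image of H under an order-preserving
  injection {0..<k} \<rightarrow> [n]; we record a copy by its edge set.\<close>

definition copies :: "nat \<Rightarrow> nat \<Rightarrow> nat set set \<Rightarrow> nat set set set" where
  "copies n k E = {(\<lambda>e. f ` e) ` E | f. strict_mono_on {0..<k} f \<and> f ` {0..<k} \<subseteq> {1..n}}"

definition nu :: "nat \<Rightarrow> nat \<Rightarrow> nat set set \<Rightarrow> nat" where
  "nu n k E = Max {card C | C. C \<subseteq> copies n k E \<and> pairwise disjnt C}"

definition path_edges :: "nat \<Rightarrow> nat \<Rightarrow> nat set set" where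
  "path_edges r s = {{j..<j + r} | j. j + r \<le> s}"

definition left_biased :: "nat \<Rightarrow> nat \<Rightarrow> nat set \<Rightarrow> bool" where
  "left_biased n m S \<longleftrightarrow> (\<exists>a b. a \<le> b \<and> b \<le> n \<and> card {1..a} = card {b+1..n}
      \<and> card ({1..a} \<inter> S) = m \<and> {b+1..n} \<inter> S = {})"

definition h :: "nat \<Rightarrow> nat \<Rightarrow> nat \<Rightarrow> nat" where
  "h n t m = card {S. S \<subseteq> {1..n} \<and> card S = t \<and> left_biased n m S}"

end

theory Submission
  imports Defs
begin

definition el :: "nat set \<Rightarrow> nat \<Rightarrow> nat" where
  "el S q = sorted_list_of_set S ! q"

lemma el_mono:
  assumes "finite S" "card S = k" "q < q'" "q' < k"
  shows "el S q < el S q'"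
proof -
  have "sorted_wrt (<) (sorted_list_of_set S)" by simp
  then show ?thesis using assms unfolding el_def
    by (simp add: sorted_wrt_iff_nth_less)
qed

lemma el_smono:
  assumes "finite S" "card S = k"
  shows "strict_mono_on {0..<k} (el S)"
  using el_mono[OF assms] by (auto simp: strict_mono_on_def)

lemma el_image:
  assumes "finite S" "card S = k"
  shows "el S ` {0..<k} = S"
proof -
  have "el S ` {0..<k} = set (sorted_list_of_set S)"
    using assms by (auto simp: el_def set_conv_nth)
  then show ?thesis using assms by simp
qed

lemma el_in:
  assumes "finite S" "card S = k" "q < k"
  shows "el S q \<in> S"
  using el_image[OF assms(1,2)] assms(3) by auto


definition gf :: "(nat \<Rightarrow> nat) \<Rightarrow> nat \<Rightarrow> nat \<Rightarrow> nat \<Rightarrow> nat" where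
  "gf x k c p = (if p < k then x p else x (p - k) + c)"

definition cp :: "nat \<Rightarrow> nat \<Rightarrow> (nat \<Rightarrow> nat) \<Rightarrow> nat set set" where
  "cp r s f = (\<lambda>e. f ` e) ` path_edges r s"

definition rho :: "nat \<Rightarrow> nat \<Rightarrow> nat" where
  "rho n z = n + 1 - z"

definition fR :: "nat \<Rightarrow> nat \<Rightarrow> (nat \<Rightarrow> nat) \<Rightarrow> nat \<Rightarrow> nat" where
  "fR n s f p = n + 1 - f (s - 1 - p)"

lemma gf_window:
  assumes "j \<le> k" "k \<le> j + r"
  shows "gf x k c ` {j..<j+r} = x ` {j..<k} \<union> (\<lambda>q. x q + c) ` {0..<j+r-k}"
proof (rule set_eqI, rule iffI)
  fix z assume "z \<in> gf x k c ` {j..<j+r}"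
  then obtain p where p: "p \<in> {j..<j+r}" "z = gf x k c p" by auto
  show "z \<in> x ` {j..<k} \<union> (\<lambda>q. x q + c) ` {0..<j+r-k}"
  proof (cases "p < k")
    case True then show ?thesis using p by (auto simp: gf_def)
  next
    case False
    then have "p - k \<in> {0..<j+r-k}" using p by auto
    then show ?thesis using p False by (auto simp: gf_def)
  qed
next
  fix z assume z: "z \<in> x ` {j..<k} \<union> (\<lambda>q. x q + c) ` {0..<j+r-k}"
  show "z \<in> gf x k c ` {j..<j+r}"
  proof (cases "z \<in> x ` {j..<k}")
    case True
    then obtain p where "p \<in> {j..<k}" "z = x p" by auto
    then show ?thesis using assms
      by (intro image_eqI[of _ _ p]) (auto simp: gf_def)
  next
    case False
    then obtain q where q: "q < j + r - k" "z = x q + c" using z by auto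
    then show ?thesis using assms
      by (intro image_eqI[of _ _ "q + k"]) (auto simp: gf_def)
  qed
qed

lemma cp_mem: "e \<in> cp r s f \<longleftrightarrow> (\<exists>j. j + r \<le> s \<and> e = f ` {j..<j+r})"
  unfolding cp_def path_edges_def by auto

lemma cp_copies:
  assumes "strict_mono_on {0..<s} f" "f ` {0..<s} \<subseteq> {1..n}"
  shows "cp r s f \<in> copies n s (path_edges r s)"
  using assms unfolding cp_def copies_def by blast

lemma gf_smono:
  assumes x: "strict_mono_on {0..<k} x" and "1 \<le> k" "s \<le> 2 * k" and c: "x (k - 1) < x 0 + c"
  shows "strict_mono_on {0..<s} (gf x k c)"
proof (rule strict_mono_onI)
  fix p q assume p: "p \<in> {0..<s}" and q: "q \<in> {0..<s}" and pq: "p < q"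
  show "gf x k c p < gf x k c q"
  proof (cases "q < k")
    case True
    then show ?thesis using pq x by (auto simp: gf_def strict_mono_on_def)
  next
    case qk: False
    show ?thesis
    proof (cases "p < k")
      case True
      have "x p \<le> x (k - 1)" using True x by (intro strict_mono_on_leD[OF x]) auto
      moreover have "x 0 \<le> x (q - k)" using q assms qk by (intro strict_mono_on_leD[OF x]) auto
      ultimately show ?thesis using True qk c by (simp add: gf_def)
    next
      case False
      have "x (p - k) < x (q - k)" using False qk pq q assms
        by (intro strict_mono_onD[OF x]) auto
      then show ?thesis using False qk by (simp add: gf_def)
    qed
  qed
qed

lemma gf_range:
  assumes "x ` {0..<k} \<subseteq> {1..n}" "s \<le> 2 * k" "\<And>q. q < s - k \<Longrightarrow> x q + c \<le> n"
  shows "gf x k c ` {0..<s} \<subseteq> {1..n}"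
proof
  fix z assume "z \<in> gf x k c ` {0..<s}"
  then obtain p where p: "p < s" "z = gf x k c p" by auto
  show "z \<in> {1..n}"
  proof (cases "p < k")
    case True
    have "x p \<in> x ` {0..<k}" using True by auto
    then have "x p \<in> {1..n}" using assms(1) by blast
    then show ?thesis using p True by (auto simp: gf_def)
  next
    case False
    then have "p - k < s - k" "p - k < k" using p assms(2) by auto
    then show ?thesis using p False assms by (force simp: gf_def)
  qed
qed

lemma fR_smono:
  assumes f: "strict_mono_on {0..<s} f" and rng: "f ` {0..<s} \<subseteq> {1..n}"
  shows "strict_mono_on {0..<s} (fR n s f)"
proof (rule strict_mono_onI)
  fix p q assume p: "p \<in> {0..<s}" and q: "q \<in> {0..<s}" and pq: "p < q"
  have "f (s - 1 - q) < f (s - 1 - p)" using p q pq by (intro strict_mono_onD[OF f]) auto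
  moreover have "f (s - 1 - p) \<in> f ` {0..<s}" using p by auto
  then have "f (s - 1 - p) \<le> n" using rng by auto
  ultimately show "fR n s f p < fR n s f q" by (simp add: fR_def)
qed

lemma fR_range:
  assumes rng: "f ` {0..<s} \<subseteq> {1..n}"
  shows "fR n s f ` {0..<s} \<subseteq> {1..n}"
proof
  fix z assume "z \<in> fR n s f ` {0..<s}"
  then obtain p where p: "p < s" "z = fR n s f p" by auto
  have "f (s - 1 - p) \<in> f ` {0..<s}" using p by auto
  then have "f (s - 1 - p) \<in> {1..n}" using rng by blast
  then show "z \<in> {1..n}" using p by (auto simp: fR_def)
qed

lemma fR_window:
  assumes "j + r \<le> s"
  shows "fR n s f ` {j..<j+r} = rho n ` f ` {s-r-j..<s-j}"
proof (rule set_eqI, rule iffI)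
  fix z assume "z \<in> fR n s f ` {j..<j+r}"
  then obtain p where p: "p \<in> {j..<j+r}" "z = fR n s f p" by auto
  then have "s - 1 - p \<in> {s-r-j..<s-j}" using assms by auto
  then show "z \<in> rho n ` f ` {s-r-j..<s-j}" using p by (auto simp: fR_def rho_def)
next
  fix z assume "z \<in> rho n ` f ` {s-r-j..<s-j}"
  then obtain q where q: "q \<in> {s-r-j..<s-j}" "z = rho n (f q)" by auto
  then have "s - 1 - q \<in> {j..<j+r}" "s - 1 - (s - 1 - q) = q" using assms by auto
  then show "z \<in> fR n s f ` {j..<j+r}" using q
    by (intro image_eqI[of _ _ "s - 1 - q"]) (auto simp: fR_def rho_def)
qed

lemma fR_cp:
  assumes "r \<le> s"
  shows "cp r s (fR n s f) = (\<lambda>e. rho n ` e) ` cp r s f"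
proof (rule set_eqI, rule iffI)
  fix e assume "e \<in> cp r s (fR n s f)"
  then obtain j where j: "j + r \<le> s" "e = fR n s f ` {j..<j+r}" by (auto simp: cp_mem)
  then have "e = rho n ` f ` {s-r-j..<s-r-j+r}" using fR_window[OF j(1)]
    by (metis Nat.add_diff_assoc2 diff_add_inverse2 diff_diff_left le_add2 add.commute)
  moreover have "s - r - j + r \<le> s" using j by auto
  ultimately have "f ` {s-r-j..<s-r-j+r} \<in> cp r s f" "e = rho n ` f ` {s-r-j..<s-r-j+r}"
    by (auto simp: cp_mem)
  then show "e \<in> (\<lambda>e. rho n ` e) ` cp r s f" by blast
next
  fix e assume "e \<in> (\<lambda>e. rho n ` e) ` cp r s f"
  then obtain j where j: "j + r \<le> s" "e = rho n ` f ` {j..<j+r}" by (auto simp: cp_mem)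
  have j2: "s - r - j + r \<le> s" using j by auto
  have "fR n s f ` {s-r-j..<s-r-j+r} = rho n ` f ` {j..<j+r}"
    using fR_window[OF j2] j(1) assms
    by (metis Nat.add_diff_assoc2 diff_add_inverse2 diff_diff_cancel diff_diff_left le_add2 add.commute le_diff_conv)
  then show "e \<in> cp r s (fR n s f)" using j j2 unfolding cp_mem by metis
qed


definition K :: "nat \<Rightarrow> nat set \<Rightarrow> nat \<Rightarrow> nat" where
  "K n e t = card (e \<inter> ({1..t} \<union> {n+1-t..n}))"

lemma K_mono:
  assumes "finite e" "t \<le> t'"
  shows "K n e t \<le> K n e t'"
  unfolding K_def using assms by (intro card_mono) auto

lemma K_det:
  assumes "finite e" "1 \<le> m"
    "K n e a \<ge> m" "K n e (a - 1) \<le> m - 1" "K n e a' \<ge> m" "K n e (a' - 1) \<le> m - 1"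
  shows "a = a'"
proof (rule ccontr)
  assume "a \<noteq> a'"
  then consider "a < a'" | "a' < a" by linarith
  then show False
  proof cases
    case 1
    then have "K n e a \<le> K n e (a' - 1)" using assms by (intro K_mono) auto
    then show False using assms by linarith
  next
    case 2
    then have "K n e a' \<le> K n e (a - 1)" using assms by (intro K_mono) auto
    then show False using assms by linarith
  qed
qed

lemma K_rho:
  assumes "e \<subseteq> {1..n}"
  shows "K n (rho n ` e) t = K n e t"
proof -
  have eq: "rho n ` e \<inter> ({1..t} \<union> {n+1-t..n}) = rho n ` (e \<inter> ({1..t} \<union> {n+1-t..n}))"
  proof (rule set_eqI, rule iffI)
    fix z assume "z \<in> rho n ` e \<inter> ({1..t} \<union> {n+1-t..n})"
    then obtain w where w: "w \<in> e" "z = n + 1 - w" "z \<in> {1..t} \<union> {n+1-t..n}"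
      by (auto simp: rho_def)
    then have "w \<in> {1..n}" using assms by auto
    then have "w \<in> {1..t} \<union> {n+1-t..n}" using w by auto
    then show "z \<in> rho n ` (e \<inter> ({1..t} \<union> {n+1-t..n}))" using w by (auto simp: rho_def)
  next
    fix z assume "z \<in> rho n ` (e \<inter> ({1..t} \<union> {n+1-t..n}))"
    then obtain w where w: "w \<in> e" "z = n + 1 - w" "w \<in> {1..t} \<union> {n+1-t..n}"
      by (auto simp: rho_def)
    then have "w \<in> {1..n}" using assms by auto
    then have "z \<in> {1..t} \<union> {n+1-t..n}" using w by auto
    then show "z \<in> rho n ` e \<inter> ({1..t} \<union> {n+1-t..n})" using w by (auto simp: rho_def)
  qed
  have "inj_on (rho n) (e \<inter> ({1..t} \<union> {n+1-t..n}))"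
    using assms by (auto simp: inj_on_def rho_def)
  then show ?thesis unfolding K_def eq by (rule card_image)
qed

lemma card_smono_image:
  fixes x :: "nat \<Rightarrow> nat"
  assumes "strict_mono_on {0..<r} x" "B \<subseteq> {0..<r}"
  shows "card (x ` B) = card B" "card ((\<lambda>q. x q + c) ` B) = card B"
proof -
  have i: "inj_on x B" using strict_mono_on_imp_inj_on[OF assms(1)] assms(2) inj_on_subset by blast
  then show "card (x ` B) = card B" by (rule card_image)
  have "inj_on (\<lambda>q. x q + c) B" using i by (auto simp: inj_on_def)
  then show "card ((\<lambda>q. x q + c) ` B) = card B" by (rule card_image)
qed


lemma L_analysis:
  fixes x :: "nat \<Rightarrow> nat"
  assumes x: "strict_mono_on {0..<r} x" and rng: "x ` {0..<r} \<subseteq> {1..n}"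
    and m: "1 \<le> m" "m \<le> r" and a: "a = x (m - 1)" and bd: "a + x (r - 1) \<le> n"
    and j: "j < m"
    and e: "e = x ` {j..<r} \<union> (\<lambda>q. x q + (n + 1 - a)) ` {0..<j}"
  shows "K n e a = m" "K n e (a - 1) \<le> m - 1" "a \<in> e" "n + 1 - a \<notin> e"
    "x ` {0..<r} = (e \<inter> {..n-a}) \<union> (\<lambda>z. z - (n + 1 - a)) ` (e \<inter> {n-a<..})"
    "e \<subseteq> {1..n}" "finite e" "1 \<le> a"
proof -
  define c where "c = n + 1 - a"
  have xr: "1 \<le> x q \<and> x q \<le> n" if "q < r" for q
  proof -
    have "x q \<in> x ` {0..<r}" using that by auto
    then show ?thesis using rng by auto
  qed
  have xle: "x q \<le> x q'" if "q \<le> q'" "q' < r" for q q'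
    using that by (intro strict_mono_on_leD[OF x]) auto
  have xlt: "x q < x q'" if "q < q'" "q' < r" for q q'
    using that by (intro strict_mono_onD[OF x]) auto
  have a1: "1 \<le> a" using xr[of "m - 1"] a m by auto
  have aa: "a \<le> x (r - 1)"
  proof -
    have "x (m - 1) \<le> x (r - 1)" using m by (intro xle) auto
    then show ?thesis using a by simp
  qed
  have xna: "x q \<le> n - a" if "q < r" for q
  proof -
    have "x q \<le> x (r - 1)" using that by (intro xle) auto
    then show ?thesis using bd by linarith
  qed
  have xa: "x q \<le> a \<longleftrightarrow> q < m" if "q < r" for q
  proof (cases "q < m")
    case True
    then have "x q \<le> x (m - 1)" using that m by (intro xle) auto
    then show ?thesis using True a by auto
  next
    case False
    then have "x (m - 1) < x q" using that m by (intro xlt) auto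
    then show ?thesis using False a by auto
  qed
  have xa1: "x q \<le> a - 1 \<longleftrightarrow> q < m - 1" if "q < r" for q
  proof (cases "q < m - 1")
    case True
    then have "x q < x (m - 1)" using that m by (intro xlt) auto
    then show ?thesis using True a by auto
  next
    case False
    then have "x (m - 1) \<le> x q" using that m by (intro xle) auto
    then show ?thesis using False a a1 by auto
  qed
  have sh: "n + 2 - a \<le> x q + c \<and> x q + c \<le> n" if "q < j" for q
  proof -
    have "x q < a" using xlt[of q "m - 1"] that j m a by auto
    then show ?thesis using xr[of q] that j m c_def aa bd by auto
  qed
  have e': "e = x ` {j..<r} \<union> (\<lambda>q. x q + c) ` {0..<j}" using e c_def by simp
  have fin: "finite e" using e by auto
  show "finite e" by (rule fin)
  show "1 \<le> a" by (rule a1)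
  show "e \<subseteq> {1..n}"
  proof
    fix z assume "z \<in> e"
    then consider q where "q \<in> {j..<r}" "z = x q" | q where "q < j" "z = x q + c"
      using e' by auto
    then show "z \<in> {1..n}"
    proof cases
      case 1 then show ?thesis using xr[of q] by auto
    next
      case 2 then show ?thesis using sh[of q] aa bd by auto
    qed
  qed
  have "m - 1 \<in> {j..<r}" using j m by auto
  then show "a \<in> e" using a e' by auto
  show "n + 1 - a \<notin> e"
  proof
    assume "n + 1 - a \<in> e"
    then consider q where "q \<in> {j..<r}" "x q = n + 1 - a" | q where "q < j" "x q + c = n + 1 - a"
      using e' by auto
    then show False
    proof cases
      case 1 then show False using xna[of q] aa bd by auto
    next
      case 2 then show False using sh[of q] a1 aa bd by auto
    qed
  qed
  have A: "e \<inter> ({1..a} \<union> {n+1-a..n}) = x ` {j..<m} \<union> (\<lambda>q. x q + c) ` {0..<j}"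
  proof (rule set_eqI, rule iffI)
    fix z assume z: "z \<in> e \<inter> ({1..a} \<union> {n+1-a..n})"
    then consider q where "q \<in> {j..<r}" "z = x q" | q where "q < j" "z = x q + c"
      using e' by auto
    then show "z \<in> x ` {j..<m} \<union> (\<lambda>q. x q + c) ` {0..<j}"
    proof cases
      case 1
      then have "x q \<le> a" using z xna[of q] aa bd by auto
      then have "q < m" using xa[of q] 1 by auto
      then show ?thesis using 1 by auto
    next
      case 2 then show ?thesis by auto
    qed
  next
    fix z assume z: "z \<in> x ` {j..<m} \<union> (\<lambda>q. x q + c) ` {0..<j}"
    then consider q where "q \<in> {j..<m}" "z = x q" | q where "q < j" "z = x q + c" by auto
    then show "z \<in> e \<inter> ({1..a} \<union> {n+1-a..n})"
    proof cases
      case 1 then show ?thesis using xa[of q] xr[of q] m e' by auto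
    next
      case 2 then show ?thesis using sh[of q] e' by auto
    qed
  qed
  have disj: "x ` {j..<m} \<inter> (\<lambda>q. x q + c) ` {0..<j} = {}"
  proof -
    have "x q \<le> a" if "q \<in> {j..<m}" for q using xa[of q] that m by auto
    moreover have "n + 2 - a \<le> x q + c" if "q < j" for q using sh[of q] that by auto
    ultimately show ?thesis using aa bd by fastforce
  qed
  have "K n e a = card (x ` {j..<m}) + card ((\<lambda>q. x q + c) ` {0..<j})"
    unfolding K_def A by (rule card_Un_disjoint) (use disj in auto)
  also have "\<dots> = (m - j) + j"
  proof -
    have "card (x ` {j..<m}) = m - j" using m j by (subst card_smono_image(1)[OF x]) auto
    moreover have "card ((\<lambda>q. x q + c) ` {0..<j}) = j" using m j by (subst card_smono_image(2)[OF x]) auto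
    ultimately show ?thesis by simp
  qed
  finally show "K n e a = m" using j by simp
  have A1: "e \<inter> ({1..a-1} \<union> {n+1-(a-1)..n}) \<subseteq> x ` {j..<m-1} \<union> (\<lambda>q. x q + c) ` {0..<j}"
  proof
    fix z assume z: "z \<in> e \<inter> ({1..a-1} \<union> {n+1-(a-1)..n})"
    then consider q where "q \<in> {j..<r}" "z = x q" | q where "q < j" "z = x q + c"
      using e' by auto
    then show "z \<in> x ` {j..<m-1} \<union> (\<lambda>q. x q + c) ` {0..<j}"
    proof cases
      case 1
      then have "x q \<le> a - 1" using z xna[of q] aa bd a1 by auto
      then have "q < m - 1" using xa1[of q] 1 by auto
      then show ?thesis using 1 by auto
    next
      case 2 then show ?thesis by auto
    qed
  qed
  have "K n e (a - 1) \<le> card (x ` {j..<m-1} \<union> (\<lambda>q. x q + c) ` {0..<j})"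
    unfolding K_def by (rule card_mono[OF _ A1]) auto
  also have "\<dots> \<le> card (x ` {j..<m-1}) + card ((\<lambda>q. x q + c) ` {0..<j})"
    by (rule card_Un_le)
  also have "\<dots> = (m - 1 - j) + j"
  proof -
    have "card (x ` {j..<m-1}) = m - 1 - j" using m j by (subst card_smono_image(1)[OF x]) auto
    moreover have "card ((\<lambda>q. x q + c) ` {0..<j}) = j" using m j by (subst card_smono_image(2)[OF x]) auto
    ultimately show ?thesis by simp
  qed
  finally show "K n e (a - 1) \<le> m - 1" using j by simp
  have lo1: "x q \<le> n - a" if "q \<in> {j..<r}" for q using xna[of q] that by auto
  have hi1: "\<not> x q + c \<le> n - a" if "q < j" for q using sh[of q] that aa bd by auto
  have lo: "e \<inter> {..n-a} = x ` {j..<r}"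
  proof (rule set_eqI, rule iffI)
    fix z assume "z \<in> e \<inter> {..n-a}"
    then show "z \<in> x ` {j..<r}" unfolding e' using hi1 by auto
  next
    fix z assume "z \<in> x ` {j..<r}"
    then show "z \<in> e \<inter> {..n-a}" unfolding e' using lo1 by auto
  qed
  have hi: "e \<inter> {n-a<..} = (\<lambda>q. x q + c) ` {0..<j}"
  proof (rule set_eqI, rule iffI)
    fix z assume "z \<in> e \<inter> {n-a<..}"
    then show "z \<in> (\<lambda>q. x q + c) ` {0..<j}" unfolding e' using lo1 by force
  next
    fix z assume "z \<in> (\<lambda>q. x q + c) ` {0..<j}"
    then show "z \<in> e \<inter> {n-a<..}" unfolding e' using hi1 by force
  qed
  have hi': "(\<lambda>z. z - c) ` (e \<inter> {n-a<..}) = x ` {0..<j}"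
    unfolding hi image_image by simp
  have "x ` {0..<r} = x ` {j..<r} \<union> x ` {0..<j}" using j m by (auto simp: image_Un[symmetric] ivl_disj_un)
  then show "x ` {0..<r} = (e \<inter> {..n-a}) \<union> (\<lambda>z. z - (n + 1 - a)) ` (e \<inter> {n-a<..})"
    using lo hi' c_def by simp
qed


lemma M_analysis:
  fixes y :: "nat \<Rightarrow> nat"
  assumes y: "strict_mono_on {0..<k} y" and rng: "y ` {0..<k} \<subseteq> {1..n}"
    and m: "1 \<le> m" "m \<le> k" and a: "a = y (m - 1)" and bd: "a + y (k - 1) \<le> n"
    and j: "j < m"
    and e: "e = y ` {j..<k} \<union> (\<lambda>q. y q + (n + 1 - y 0 - a)) ` {0..<j+1}"
  shows "m + 1 \<le> K n e a" "K n e (a - 1) \<le> m - 1"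
    "y ` {0..<k} = (e \<inter> {..n-a}) \<union> (\<lambda>z. z - (Max e - Min e)) ` (e \<inter> {n-a<..})"
    "e \<subseteq> {1..n}" "finite e" "1 \<le> a"
proof -
  define c where "c = n + 1 - y 0 - a"
  have yr: "1 \<le> y q \<and> y q \<le> n" if "q < k" for q
  proof -
    have "y q \<in> y ` {0..<k}" using that by auto
    then show ?thesis using rng by auto
  qed
  have yle: "y q \<le> y q'" if "q \<le> q'" "q' < k" for q q'
    using that by (intro strict_mono_on_leD[OF y]) auto
  have ylt: "y q < y q'" if "q < q'" "q' < k" for q q'
    using that by (intro strict_mono_onD[OF y]) auto
  have a1: "1 \<le> a" using yr[of "m - 1"] a m by auto
  have aa: "a \<le> y (k - 1)"
  proof -
    have "y (m - 1) \<le> y (k - 1)" using m by (intro yle) auto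
    then show ?thesis using a by simp
  qed
  have yna: "y q \<le> n - a" if "q < k" for q
  proof -
    have "y q \<le> y (k - 1)" using that by (intro yle) auto
    then show ?thesis using bd by linarith
  qed
  have ya: "y q \<le> a \<longleftrightarrow> q < m" if "q < k" for q
  proof (cases "q < m")
    case True
    then have "y q \<le> y (m - 1)" using that m by (intro yle) auto
    then show ?thesis using True a by auto
  next
    case False
    then have "y (m - 1) < y q" using that m by (intro ylt) auto
    then show ?thesis using False a by auto
  qed
  have ya1: "y q \<le> a - 1 \<longleftrightarrow> q < m - 1" if "q < k" for q
  proof (cases "q < m - 1")
    case True
    then have "y q < y (m - 1)" using that m by (intro ylt) auto
    then show ?thesis using True a by auto
  next
    case False
    then have "y (m - 1) \<le> y q" using that m by (intro yle) auto
    then show ?thesis using False a a1 by auto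
  qed
  have y0a: "y 0 \<le> a" using ya[of 0] m by auto
  have y01: "1 \<le> y 0" using yr[of 0] m by auto
  have c0: "y 0 + c = n + 1 - a" using c_def y0a aa bd by auto
  have sh: "n + 1 - a \<le> y q + c \<and> y q + c \<le> n" if "q \<le> j" for q
  proof -
    have "y 0 \<le> y q" using that j m by (intro yle) auto
    moreover have "y q \<le> a" using ya[of q] that j m by auto
    ultimately show ?thesis using c0 y01 by auto
  qed
  have sh1: "n + 2 - a \<le> y q + c" if "1 \<le> q" "q \<le> j" for q
  proof -
    have "y 0 < y q" using that j m by (intro ylt) auto
    then show ?thesis using c0 aa bd by auto
  qed
  have e': "e = y ` {j..<k} \<union> (\<lambda>q. y q + c) ` {0..<j+1}" using e c_def by simp
  have fin: "finite e" using e by auto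
  show "finite e" by (rule fin)
  show "1 \<le> a" by (rule a1)
  show "e \<subseteq> {1..n}"
  proof
    fix z assume "z \<in> e"
    then consider q where "q \<in> {j..<k}" "z = y q" | q where "q < j + 1" "z = y q + c"
      using e' by auto
    then show "z \<in> {1..n}"
    proof cases
      case 1 then show ?thesis using yr[of q] by auto
    next
      case 2 then show ?thesis using sh[of q] aa bd by auto
    qed
  qed
  have A: "y ` {j..<m} \<union> (\<lambda>q. y q + c) ` {0..<j+1} \<subseteq> e \<inter> ({1..a} \<union> {n+1-a..n})"
  proof
    fix z assume z: "z \<in> y ` {j..<m} \<union> (\<lambda>q. y q + c) ` {0..<j+1}"
    then consider q where "q \<in> {j..<m}" "z = y q" | q where "q < j + 1" "z = y q + c" by auto
    then show "z \<in> e \<inter> ({1..a} \<union> {n+1-a..n})"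
    proof cases
      case 1 then show ?thesis using ya[of q] yr[of q] m e' by auto
    next
      case 2 then show ?thesis using sh[of q] e' by auto
    qed
  qed
  have disj: "y ` {j..<m} \<inter> (\<lambda>q. y q + c) ` {0..<j+1} = {}"
  proof -
    have "y q \<le> a" if "q \<in> {j..<m}" for q using ya[of q] that m by auto
    moreover have "n + 1 - a \<le> y q + c" if "q < j + 1" for q using sh[of q] that by auto
    ultimately show ?thesis using aa bd by fastforce
  qed
  have "(m - j) + (j + 1) = card (y ` {j..<m}) + card ((\<lambda>q. y q + c) ` {0..<j+1})"
  proof -
    have "card (y ` {j..<m}) = m - j" using m j by (subst card_smono_image(1)[OF y]) auto
    moreover have "card ((\<lambda>q. y q + c) ` {0..<j+1}) = j + 1" using m j by (subst card_smono_image(2)[OF y]) auto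
    ultimately show ?thesis by simp
  qed
  also have "\<dots> = card (y ` {j..<m} \<union> (\<lambda>q. y q + c) ` {0..<j+1})"
    by (rule card_Un_disjoint[symmetric]) (use disj in auto)
  also have "\<dots> \<le> K n e a" unfolding K_def by (rule card_mono[OF _ A]) (use fin in auto)
  finally show "m + 1 \<le> K n e a" using j by simp
  have A1: "e \<inter> ({1..a-1} \<union> {n+1-(a-1)..n}) \<subseteq> y ` {j..<m-1} \<union> (\<lambda>q. y q + c) ` {1..<j+1}"
  proof
    fix z assume z: "z \<in> e \<inter> ({1..a-1} \<union> {n+1-(a-1)..n})"
    then consider q where "q \<in> {j..<k}" "z = y q" | q where "q < j + 1" "z = y q + c"
      using e' by auto
    then show "z \<in> y ` {j..<m-1} \<union> (\<lambda>q. y q + c) ` {1..<j+1}"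
    proof cases
      case 1
      then have "y q \<le> a - 1" using z yna[of q] aa bd a1 by auto
      then have "q < m - 1" using ya1[of q] 1 by auto
      then show ?thesis using 1 by auto
    next
      case 2
      have "q \<noteq> 0"
      proof
        assume "q = 0"
        then have "z = n + 1 - a" using 2 c0 by simp
        then show False using z aa bd a1 by auto
      qed
      then show ?thesis using 2 by auto
    qed
  qed
  have "K n e (a - 1) \<le> card (y ` {j..<m-1} \<union> (\<lambda>q. y q + c) ` {1..<j+1})"
    unfolding K_def by (rule card_mono[OF _ A1]) auto
  also have "\<dots> \<le> card (y ` {j..<m-1}) + card ((\<lambda>q. y q + c) ` {1..<j+1})"
    by (rule card_Un_le)
  also have "\<dots> = (m - 1 - j) + j"
  proof -
    have "card (y ` {j..<m-1}) = m - 1 - j" using m j by (subst card_smono_image(1)[OF y]) auto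
    moreover have "card ((\<lambda>q. y q + c) ` {1..<j+1}) = j" using m j by (subst card_smono_image(2)[OF y]) auto
    ultimately show ?thesis by simp
  qed
  finally show "K n e (a - 1) \<le> m - 1" using j by simp
  have lo1: "y q \<le> n - a" if "q \<in> {j..<k}" for q using yna[of q] that by auto
  have hi1: "\<not> y q + c \<le> n - a" if "q < j + 1" for q using sh[of q] that aa bd by auto
  have lo: "e \<inter> {..n-a} = y ` {j..<k}"
  proof (rule set_eqI, rule iffI)
    fix z assume "z \<in> e \<inter> {..n-a}"
    then show "z \<in> y ` {j..<k}" unfolding e' using hi1 by auto
  next
    fix z assume "z \<in> y ` {j..<k}"
    then show "z \<in> e \<inter> {..n-a}" unfolding e' using lo1 by auto
  qed
  have hi: "e \<inter> {n-a<..} = (\<lambda>q. y q + c) ` {0..<j+1}"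
  proof (rule set_eqI, rule iffI)
    fix z assume "z \<in> e \<inter> {n-a<..}"
    then show "z \<in> (\<lambda>q. y q + c) ` {0..<j+1}" unfolding e' using lo1 by force
  next
    fix z assume "z \<in> (\<lambda>q. y q + c) ` {0..<j+1}"
    then show "z \<in> e \<inter> {n-a<..}" unfolding e' using hi1 by force
  qed
  have mn: "Min e = y j"
  proof (rule Min_eqI[OF fin])
    show "y j \<in> e" using e' j m by auto
    fix z assume "z \<in> e"
    then consider q where "q \<in> {j..<k}" "z = y q" | q where "q < j + 1" "z = y q + c"
      using e' by auto
    then show "y j \<le> z"
    proof cases
      case 1 then show ?thesis using yle[of j q] by auto
    next
      case 2 then show ?thesis using sh[of q] yna[of j] j m by auto
    qed
  qed
  have mx: "Max e = y j + c"
  proof (rule Max_eqI[OF fin])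
    show "y j + c \<in> e" using e' j m by auto
    fix z assume "z \<in> e"
    then consider q where "q \<in> {j..<k}" "z = y q" | q where "q < j + 1" "z = y q + c"
      using e' by auto
    then show "z \<le> y j + c"
    proof cases
      case 1 then show ?thesis using sh[of j] yna[of q] by auto
    next
      case 2 then show ?thesis using yle[of q j] j m by auto
    qed
  qed
  have hi': "(\<lambda>z. z - (Max e - Min e)) ` (e \<inter> {n-a<..}) = y ` {0..<j+1}"
    unfolding hi image_image mn mx by simp
  have "y ` {0..<k} = y ` {j..<k} \<union> y ` {0..<j+1}" using j m by (auto simp: image_Un[symmetric] ivl_disj_un)
  then show "y ` {0..<k} = (e \<inter> {..n-a}) \<union> (\<lambda>z. z - (Max e - Min e)) ` (e \<inter> {n-a<..})"
    using lo hi' by simp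
qed


definition fL :: "nat \<Rightarrow> nat \<Rightarrow> nat \<Rightarrow> nat set \<Rightarrow> nat \<Rightarrow> nat" where
  "fL n r m S = gf (el S) r (n + 1 - el S (m - 1))"

definition fM :: "nat \<Rightarrow> nat \<Rightarrow> nat \<Rightarrow> nat set \<Rightarrow> nat \<Rightarrow> nat" where
  "fM n r m T = gf (el T) (r - 1) (n + 1 - el T 0 - el T (m - 1))"

definition decL :: "nat \<Rightarrow> nat set \<Rightarrow> nat \<Rightarrow> nat set" where
  "decL n e a = (e \<inter> {..n-a}) \<union> (\<lambda>z. z - (n + 1 - a)) ` (e \<inter> {n-a<..})"

definition decM :: "nat \<Rightarrow> nat set \<Rightarrow> nat \<Rightarrow> nat set" where
  "decM n e a = (e \<inter> {..n-a}) \<union> (\<lambda>z. z - (Max e - Min e)) ` (e \<inter> {n-a<..})"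

lemma lb_props:
  assumes S: "S \<subseteq> {1..n}" "card S = k" and lb: "left_biased n m S" and m: "1 \<le> m"
  shows "m \<le> k" "el S (m - 1) + el S (k - 1) \<le> n"
proof -
  obtain a b where ab: "a \<le> b" "b \<le> n" "card {1..a} = card {b+1..n}"
    "card ({1..a} \<inter> S) = m" "{b+1..n} \<inter> S = {}"
    using lb unfolding left_biased_def by blast
  have fin: "finite S" using S finite_subset by blast
  have an: "a = n - b" using ab(3) by simp
  have "card ({1..a} \<inter> S) \<le> card S" using fin by (intro card_mono) auto
  then show mk: "m \<le> k" using ab S by simp
  have sm: "strict_mono_on {0..<k} (el S)" using el_smono[OF fin S(2)] .
  have top: "el S (k - 1) \<le> b"
  proof -
    have "el S (k - 1) \<in> S" using el_in[OF fin S(2)] mk m by auto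
    then have "el S (k - 1) \<le> n" "el S (k - 1) \<notin> {b+1..n}" using ab(5) S by auto
    then show ?thesis by auto
  qed
  have bot: "el S (m - 1) \<le> a"
  proof (rule ccontr)
    assume "\<not> el S (m - 1) \<le> a"
    then have lt: "a < el S (m - 1)" by simp
    have "{1..a} \<inter> S \<subseteq> el S ` {0..<m-1}"
    proof
      fix z assume z: "z \<in> {1..a} \<inter> S"
      have "z \<in> el S ` {0..<k}" using z el_image[OF fin S(2)] by auto
      then obtain q where q: "q < k" "z = el S q" by auto
      have "q < m - 1"
      proof (rule ccontr)
        assume "\<not> q < m - 1"
        then have "el S (m - 1) \<le> el S q" using q mk m
          by (intro strict_mono_on_leD[OF sm]) auto
        then show False using z q lt by auto
      qed
      then show "z \<in> el S ` {0..<m-1}" using q by auto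
    qed
    then have "card ({1..a} \<inter> S) \<le> card (el S ` {0..<m-1})" by (intro card_mono) auto
    also have "\<dots> \<le> m - 1" using card_image_le[of "{0..<m-1}" "el S"] by simp
    finally show False using ab(4) m by simp
  qed
  show "el S (m - 1) + el S (k - 1) \<le> n" using top bot an ab by linarith
qed

lemma fL_good:
  assumes S: "S \<subseteq> {1..n}" "card S = r" and lb: "left_biased n m S" and m: "1 \<le> m"
    and s: "s = r + m - 1"
  shows "strict_mono_on {0..<s} (fL n r m S)" "fL n r m S ` {0..<s} \<subseteq> {1..n}"
proof -
  have fin: "finite S" using S finite_subset by blast
  have mr: "m \<le> r" and bd: "el S (m - 1) + el S (r - 1) \<le> n" using lb_props[OF S lb m] by auto
  let ?x = "el S" let ?a = "el S (m - 1)"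
  have sm: "strict_mono_on {0..<r} ?x" using el_smono[OF fin S(2)] .
  have rng: "?x ` {0..<r} \<subseteq> {1..n}" using el_image[OF fin S(2)] S by simp
  have "?x 0 \<in> S" using el_in[OF fin S(2), of 0] m mr by auto
  then have x0: "1 \<le> ?x 0" using S by auto
  show "strict_mono_on {0..<s} (fL n r m S)" unfolding fL_def
    by (rule gf_smono[OF sm]) (use m mr s bd x0 in auto)
  show "fL n r m S ` {0..<s} \<subseteq> {1..n}" unfolding fL_def
  proof (rule gf_range[OF rng])
    show "s \<le> 2 * r" using s mr by auto
    fix q assume "q < s - r"
    then have "?x q < ?a" using s m mr by (intro strict_mono_onD[OF sm]) auto
    moreover have "?a \<le> n" using bd by auto
    ultimately show "?x q + (n + 1 - ?a) \<le> n" by auto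
  qed
qed

lemma fM_good:
  assumes S: "T \<subseteq> {1..n}" "card T = r - 1" and lb: "left_biased n m T" and m: "1 \<le> m"
    and s: "s = r + m - 1"
  shows "strict_mono_on {0..<s} (fM n r m T)" "fM n r m T ` {0..<s} \<subseteq> {1..n}"
proof -
  have fin: "finite T" using S finite_subset by blast
  have mr: "m \<le> r - 1" and bd: "el T (m - 1) + el T (r - 1 - 1) \<le> n" using lb_props[OF S lb m] by auto
  let ?y = "el T" let ?a = "el T (m - 1)"
  have sm: "strict_mono_on {0..<r-1} ?y" using el_smono[OF fin S(2)] .
  have rng: "?y ` {0..<r-1} \<subseteq> {1..n}" using el_image[OF fin S(2)] S by simp
  have "?y 0 \<in> T" using el_in[OF fin S(2), of 0] m mr by auto
  then have y0: "1 \<le> ?y 0" using S by auto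
  have y0a: "?y 0 \<le> ?a" using m mr by (intro strict_mono_on_leD[OF sm]) auto
  have aa: "?a \<le> ?y (r - 1 - 1)" using m mr by (intro strict_mono_on_leD[OF sm]) auto
  have s2: "s \<le> 2 * (r - 1)" using s mr m by linarith
  have c1: "?y 0 + (n + 1 - ?y 0 - ?a) = n + 1 - ?a" using y0a aa bd by auto
  have c2: "?y (r - 1 - 1) < n + 1 - ?a" using bd by auto
  show "strict_mono_on {0..<s} (fM n r m T)" unfolding fM_def
    by (rule gf_smono[OF sm]) (use m mr s c1 c2 s2 in auto)
  show "fM n r m T ` {0..<s} \<subseteq> {1..n}" unfolding fM_def
  proof (rule gf_range[OF rng])
    show "s \<le> 2 * (r - 1)" using s mr by auto
    fix q assume "q < s - (r - 1)"
    then have "?y q \<le> ?a" using s m mr by (intro strict_mono_on_leD[OF sm]) auto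
    then show "?y q + (n + 1 - ?y 0 - ?a) \<le> n" using y0 y0a aa bd by auto
  qed
qed

lemma L_win:
  assumes S: "S \<subseteq> {1..n}" "card S = r" and lb: "left_biased n m S" and m: "1 \<le> m"
    and s: "s = r + m - 1" and e: "e \<in> cp r s (fL n r m S)"
  shows "\<exists>a. K n e a = m \<and> K n e (a - 1) \<le> m - 1 \<and> a \<in> e \<and> n + 1 - a \<notin> e
    \<and> e \<subseteq> {1..n} \<and> finite e \<and> 1 \<le> a \<and> S = decL n e a"
proof -
  have fin: "finite S" using S finite_subset by blast
  have mr: "m \<le> r" and bd: "el S (m - 1) + el S (r - 1) \<le> n" using lb_props[OF S lb m] by auto
  obtain j where j: "j + r \<le> s" "e = fL n r m S ` {j..<j+r}" using e by (auto simp: cp_mem)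
  have jm: "j < m" using j s m by auto
  have e2: "e = el S ` {j..<r} \<union> (\<lambda>q. el S q + (n + 1 - el S (m - 1))) ` {0..<j}"
    using j(2) gf_window[of j r r "el S" "n + 1 - el S (m - 1)"] jm mr unfolding fL_def by simp
  have sm: "strict_mono_on {0..<r} (el S)" using el_smono[OF fin S(2)] .
  have rng: "el S ` {0..<r} \<subseteq> {1..n}" using el_image[OF fin S(2)] S by simp
  note L = L_analysis[OF sm rng m mr refl bd jm e2]
  have "S = decL n e (el S (m - 1))" using L(5) el_image[OF fin S(2)] unfolding decL_def by simp
  then show ?thesis using L by blast
qed

lemma M_win:
  assumes S: "T \<subseteq> {1..n}" "card T = r - 1" and lb: "left_biased n m T" and m: "1 \<le> m"
    and s: "s = r + m - 1" and e: "e \<in> cp r s (fM n r m T)"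
  shows "\<exists>a. m + 1 \<le> K n e a \<and> K n e (a - 1) \<le> m - 1
    \<and> e \<subseteq> {1..n} \<and> finite e \<and> 1 \<le> a \<and> T = decM n e a"
proof -
  have fin: "finite T" using S finite_subset by blast
  have mr: "m \<le> r - 1" and bd: "el T (m - 1) + el T (r - 1 - 1) \<le> n" using lb_props[OF S lb m] by auto
  obtain j where j: "j + r \<le> s" "e = fM n r m T ` {j..<j+r}" using e by (auto simp: cp_mem)
  have jm: "j < m" using j s m by auto
  have jr: "j + r - (r - 1) = j + 1" using mr m by auto
  have e2: "e = el T ` {j..<r-1} \<union> (\<lambda>q. el T q + (n + 1 - el T 0 - el T (m - 1))) ` {0..<j+1}"
    using j(2) gf_window[of j "r - 1" r "el T" "n + 1 - el T 0 - el T (m - 1)"] jm mr jr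
    unfolding fM_def by simp
  have sm: "strict_mono_on {0..<r-1} (el T)" using el_smono[OF fin S(2)] .
  have rng: "el T ` {0..<r-1} \<subseteq> {1..n}" using el_image[OF fin S(2)] S by simp
  note M = M_analysis[OF sm rng m mr refl bd jm e2]
  have "T = decM n e (el T (m - 1))" using M(3) el_image[OF fin S(2)] unfolding decM_def by simp
  then show ?thesis using M by blast
qed


definition LT :: "nat \<Rightarrow> nat \<Rightarrow> nat set \<Rightarrow> nat \<Rightarrow> bool" where
  "LT n m e a \<longleftrightarrow> K n e a = m \<and> K n e (a - 1) \<le> m - 1 \<and> a \<in> e \<and> n + 1 - a \<notin> e
    \<and> e \<subseteq> {1..n} \<and> finite e \<and> 1 \<le> a"

definition MT :: "nat \<Rightarrow> nat \<Rightarrow> nat set \<Rightarrow> nat \<Rightarrow> bool" where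
  "MT n m e a \<longleftrightarrow> m + 1 \<le> K n e a \<and> K n e (a - 1) \<le> m - 1
    \<and> e \<subseteq> {1..n} \<and> finite e \<and> 1 \<le> a"

definition CL :: "nat \<Rightarrow> nat \<Rightarrow> nat set \<Rightarrow> nat \<Rightarrow> nat set \<Rightarrow> bool" where
  "CL n m e i S \<longleftrightarrow> (i = 0 \<and> (\<exists>a. LT n m e a \<and> S = decL n e a))
    \<or> (i = 1 \<and> (\<exists>e0 a. e = rho n ` e0 \<and> LT n m e0 a \<and> S = decL n e0 a))
    \<or> (i = 2 \<and> (\<exists>a. MT n m e a \<and> S = decM n e a))"

lemma rho_rho:
  assumes "e0 \<subseteq> {1..n}"
  shows "rho n ` rho n ` e0 = e0"
proof -
  have "rho n (rho n z) = z" if "z \<in> e0" for z using that assms by (auto simp: rho_def)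
  then show ?thesis by (force simp: image_image)
qed

lemma CL_info:
  assumes "CL n m e i S"
  shows "\<exists>a. K n e a \<ge> m \<and> K n e (a - 1) \<le> m - 1 \<and> finite e \<and> i \<le> 2
    \<and> (i = 0 \<longrightarrow> K n e a = m \<and> a \<in> e \<and> S = decL n e a)
    \<and> (i = 1 \<longrightarrow> K n e a = m \<and> a \<notin> e \<and> S = decL n (rho n ` e) a)
    \<and> (i = 2 \<longrightarrow> K n e a \<ge> m + 1 \<and> S = decM n e a)"
  using assms unfolding CL_def
proof (elim disjE conjE exE)
  fix a assume "i = 0" "LT n m e a" "S = decL n e a"
  then show ?thesis unfolding LT_def by (intro exI[of _ a]) auto
next
  fix e0 a assume i: "i = 1" and e: "e = rho n ` e0" and L: "LT n m e0 a" and S: "S = decL n e0 a"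
  have sub: "e0 \<subseteq> {1..n}" using L by (auto simp: LT_def)
  have Kt: "K n e t = K n e0 t" for t using K_rho[OF sub] e by simp
  have "a \<notin> e"
  proof
    assume "a \<in> e"
    then obtain z where z: "z \<in> e0" "a = n + 1 - z" using e by (auto simp: rho_def)
    then have "z \<le> n" "1 \<le> z" using sub by auto
    then have "z = n + 1 - a" using z by auto
    then show False using z L by (auto simp: LT_def)
  qed
  moreover have "rho n ` e = e0" using rho_rho[OF sub] e by simp
  ultimately show ?thesis using L i S e unfolding LT_def Kt by (intro exI[of _ a]) auto
next
  fix a assume "i = 2" "MT n m e a" "S = decM n e a"
  then show ?thesis unfolding MT_def by (intro exI[of _ a]) auto
qed

lemma CL_unique:
  assumes m: "1 \<le> m" and c1: "CL n m e i S" and c2: "CL n m e i' S'"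
  shows "i = i' \<and> S = S'"
proof -
  obtain a where a: "K n e a \<ge> m" "K n e (a - 1) \<le> m - 1" "finite e" "i \<le> 2"
    "i = 0 \<longrightarrow> K n e a = m \<and> a \<in> e \<and> S = decL n e a"
    "i = 1 \<longrightarrow> K n e a = m \<and> a \<notin> e \<and> S = decL n (rho n ` e) a"
    "i = 2 \<longrightarrow> K n e a \<ge> m + 1 \<and> S = decM n e a"
    using CL_info[OF c1] by blast
  obtain a' where a': "K n e a' \<ge> m" "K n e (a' - 1) \<le> m - 1" "i' \<le> 2"
    "i' = 0 \<longrightarrow> K n e a' = m \<and> a' \<in> e \<and> S' = decL n e a'"
    "i' = 1 \<longrightarrow> K n e a' = m \<and> a' \<notin> e \<and> S' = decL n (rho n ` e) a'"
    "i' = 2 \<longrightarrow> K n e a' \<ge> m + 1 \<and> S' = decM n e a'"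
    using CL_info[OF c2] by blast
  have aa: "a' = a" using K_det[OF a(3) m a(1) a(2) a'(1) a'(2)] by simp
  have i: "i = 0 \<or> i = 1 \<or> i = 2" using a(4) by linarith
  have i': "i' = 0 \<or> i' = 1 \<or> i' = 2" using a'(3) by linarith
  note b = a'(4,5,6)[unfolded aa]
  from i show ?thesis
  proof (elim disjE)
    assume i0: "i = 0"
    from i' show ?thesis
    proof (elim disjE)
      assume "i' = 0" then show ?thesis using i0 a(5) b(1) by simp
    next
      assume "i' = 1" then show ?thesis using i0 a(5) b(2) by simp
    next
      assume "i' = 2" then show ?thesis using i0 a(5) b(3) by simp
    qed
  next
    assume i0: "i = 1"
    from i' show ?thesis
    proof (elim disjE)
      assume "i' = 0" then show ?thesis using i0 a(6) b(1) by simp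
    next
      assume "i' = 1" then show ?thesis using i0 a(6) b(2) by simp
    next
      assume "i' = 2" then show ?thesis using i0 a(6) b(3) by simp
    qed
  next
    assume i0: "i = 2"
    from i' show ?thesis
    proof (elim disjE)
      assume "i' = 0" then show ?thesis using i0 a(7) b(1) by simp
    next
      assume "i' = 1" then show ?thesis using i0 a(7) b(2) by simp
    next
      assume "i' = 2" then show ?thesis using i0 a(7) b(3) by simp
    qed
  qed
qed


lemma copies_sub:
  "copies n s (path_edges r s) \<subseteq> Pow (Pow {1..n})"
proof
  fix X assume "X \<in> copies n s (path_edges r s)"
  then obtain f where f: "X = (\<lambda>e. f ` e) ` path_edges r s" "f ` {0..<s} \<subseteq> {1..n}"
    unfolding copies_def by blast
  have "f ` e \<subseteq> {1..n}" if "e \<in> path_edges r s" for e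
  proof -
    have "e \<subseteq> {0..<s}" using that unfolding path_edges_def by auto
    then show ?thesis using f(2) by blast
  qed
  then show "X \<in> Pow (Pow {1..n})" using f(1) by auto
qed

theorem theorem2p2:
  fixes n r s m :: nat
  assumes "even n" and "1 \<le> r" and "r \<le> s" and "s \<le> 2 * r - 1" and "m = s - r + 1"
  shows "nu n s (path_edges r s) \<ge> 2 * h n r m + h n (r - 1) m"
proof -
  have m1: "1 \<le> m" using assms by simp
  have sdef: "s = r + m - 1" using assms by simp
  define HL where "HL = {S. S \<subseteq> {1..n} \<and> card S = r \<and> left_biased n m S}"
  define HM where "HM = {T. T \<subseteq> {1..n} \<and> card T = r - 1 \<and> left_biased n m T}"
  define F where "F = (\<lambda>p::nat \<times> nat set. if fst p = 0 then cp r s (fL n r m (snd p))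
      else if fst p = 1 then cp r s (fR n s (fL n r m (snd p))) else cp r s (fM n r m (snd p)))"
  define I where "I = ({0::nat} \<times> HL) \<union> ({1} \<times> HL) \<union> ({2} \<times> HM)"
  have finHL: "finite HL" unfolding HL_def by (rule finite_subset[of _ "Pow {1..n}"]) auto
  have finHM: "finite HM" unfolding HM_def by (rule finite_subset[of _ "Pow {1..n}"]) auto
  have finI: "finite I" unfolding I_def using finHL finHM by auto
  have cardI: "card I = 2 * card HL + card HM"
  proof -
    have d1: "card ({0::nat} \<times> HL \<union> {1} \<times> HL) = card HL + card HL"
      using finHL by (subst card_Un_disjoint) (auto simp: card_cartesian_product)
    have "card I = card ({0::nat} \<times> HL \<union> {1} \<times> HL) + card ({2::nat} \<times> HM)"
      unfolding I_def using finHL finHM by (intro card_Un_disjoint) auto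
    then show ?thesis using d1 by (simp add: card_cartesian_product)
  qed
  have CLF: "CL n m e (fst p) (snd p)" if p: "p \<in> I" and e: "e \<in> F p" for p e
  proof -
    obtain i S where pp: "p = (i, S)" by force
    have "(i = 0 \<and> S \<in> HL) \<or> (i = 1 \<and> S \<in> HL) \<or> (i = 2 \<and> S \<in> HM)"
      using p pp unfolding I_def by auto
    then show ?thesis
    proof (elim disjE conjE)
      assume i: "i = 0" and S: "S \<in> HL"
      have "e \<in> cp r s (fL n r m S)" using e pp i unfolding F_def by simp
      then obtain a where "LT n m e a \<and> S = decL n e a"
        using L_win[of S n r m s e] S m1 sdef unfolding HL_def LT_def by auto
      then show ?thesis using pp i unfolding CL_def by auto
    next
      assume i: "i = 1" and S: "S \<in> HL"
      have "e \<in> cp r s (fR n s (fL n r m S))" using e pp i unfolding F_def by simp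
      then obtain e0 where e0: "e0 \<in> cp r s (fL n r m S)" "e = rho n ` e0"
        using fR_cp[OF assms(3)] by auto
      then obtain a where "LT n m e0 a \<and> S = decL n e0 a"
        using L_win[of S n r m s e0] S m1 sdef unfolding HL_def LT_def by auto
      then show ?thesis using pp i e0 unfolding CL_def by auto
    next
      assume i: "i = 2" and S: "S \<in> HM"
      have "e \<in> cp r s (fM n r m S)" using e pp i unfolding F_def by simp
      then obtain a where "MT n m e a \<and> S = decM n e a"
        using M_win[of S n r m s e] S m1 sdef unfolding HM_def MT_def by auto
      then show ?thesis using pp i unfolding CL_def by auto
    qed
  qed
  have uniq: "p = p'" if "p \<in> I" "p' \<in> I" "e \<in> F p" "e \<in> F p'" for p p' e
    using CL_unique[OF m1 CLF[OF that(1,3)] CLF[OF that(2,4)]] by (simp add: prod_eq_iff)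
  have ne: "F p \<noteq> {}" for p
  proof -
    have "{0..<r} \<in> path_edges r s" using assms(3) unfolding path_edges_def by force
    then have "path_edges r s \<noteq> {}" by auto
    then show ?thesis unfolding F_def cp_def by auto
  qed
  have inj: "inj_on F I"
  proof (rule inj_onI)
    fix p p' assume "p \<in> I" "p' \<in> I" "F p = F p'"
    moreover obtain e where "e \<in> F p" using ne by blast
    ultimately show "p = p'" using uniq by metis
  qed
  have pw: "pairwise disjnt (F ` I)"
    unfolding pairwise_def disjnt_def
  proof (intro ballI impI)
    fix A B assume "A \<in> F ` I" "B \<in> F ` I" "A \<noteq> B"
    then obtain p p' where "p \<in> I" "p' \<in> I" "A = F p" "B = F p'" "p \<noteq> p'" by auto
    then show "A \<inter> B = {}" using uniq by blast
  qed
  have sub: "F ` I \<subseteq> copies n s (path_edges r s)"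
  proof
    fix X assume "X \<in> F ` I"
    then obtain i S where pI: "(i, S) \<in> I" and X: "X = F (i, S)" by auto
    have "(i = 0 \<and> S \<in> HL) \<or> (i = 1 \<and> S \<in> HL) \<or> (i = 2 \<and> S \<in> HM)"
      using pI unfolding I_def by auto
    then show "X \<in> copies n s (path_edges r s)"
    proof (elim disjE conjE)
      assume i: "i = 0" and S: "S \<in> HL"
      note g = fL_good[of S n r m s] 
      have "X = cp r s (fL n r m S)" using X i unfolding F_def by simp
      then show ?thesis using g S m1 sdef unfolding HL_def by (auto intro!: cp_copies)
    next
      assume i: "i = 1" and S: "S \<in> HL"
      note g = fL_good[of S n r m s]
      have "X = cp r s (fR n s (fL n r m S))" using X i unfolding F_def by simp
      then show ?thesis using g S m1 sdef unfolding HL_def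
        by (auto intro!: cp_copies fR_smono fR_range)
    next
      assume i: "i = 2" and S: "S \<in> HM"
      note g = fM_good[of S n r m s]
      have "X = cp r s (fM n r m S)" using X i unfolding F_def by simp
      then show ?thesis using g S m1 sdef unfolding HM_def by (auto intro!: cp_copies)
    qed
  qed
  have fin: "finite {card C | C. C \<subseteq> copies n s (path_edges r s) \<and> pairwise disjnt C}"
  proof -
    have "{card C | C. C \<subseteq> copies n s (path_edges r s) \<and> pairwise disjnt C}
        \<subseteq> card ` Pow (Pow (Pow {1..n}))" using copies_sub by blast
    then show ?thesis by (rule finite_subset) auto
  qed
  have "card (F ` I) \<in> {card C | C. C \<subseteq> copies n s (path_edges r s) \<and> pairwise disjnt C}"
    using sub pw by blast
  then have "card (F ` I) \<le> nu n s (path_edges r s)"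
    unfolding nu_def using fin by (intro Max_ge) auto
  moreover have "card (F ` I) = 2 * h n r m + h n (r - 1) m"
    using card_image[OF inj] cardI unfolding h_def HL_def HM_def by simp
  ultimately show ?thesis by simp
qed

end
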